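(* Let $a,b$ be integers and let $G\in\mathscr{G}_{a,b}$ be a graph containing a cycle and having at least one pendant vertex. If $v_0v_1\ldots v_k$ is a longest pendant path in $G$, then $k=1$.
   Context: All graphs are simple and connected; $d_G(v)$ is the degree of $v$, $N_G(v)$ its neighbourhood. For integers $a,b$, $\mathscr{G}_{a,b}$ is the set of connected graphs $G$ such that for every $v\in V_G$, $\sum_{u\in N_G(v)}d_G(u)=a\,d_G(v)+b-d_G(v)^2$. A pendant vertex is a vertex of degree $1$; $PV(G)$ is the set of pendant vertices. The base $\widetilde{G}$ of $G$ is the subgraph obtained from $G$ by repeatedly deleting pendant vertices until none remain. If $G$ contains a cycle and $PV(G)\neq\emptyset$, a longest pendant path is a longest path $v_0v_1\ldots v_k$ with $v_0\in PV(G)$, $v_i\notin V_{\widetilde G}$ for $1\le i\le k-1$, and $v_k\in V_{\widetilde G}$. *)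

theory Defs
  imports Main
begin

definition simple_graph :: "'a set \<Rightarrow> ('a \<Rightarrow> 'a \<Rightarrow> bool) \<Rightarrow> bool" where
  "simple_graph V E \<longleftrightarrow> finite V \<and> (\<forall>u v. E u v \<longrightarrow> E v u) \<and> (\<forall>v. \<not> E v v)
     \<and> (\<forall>u v. E u v \<longrightarrow> u \<in> V \<and> v \<in> V)"

definition connected_graph :: "'a set \<Rightarrow> ('a \<Rightarrow> 'a \<Rightarrow> bool) \<Rightarrow> bool" where
  "connected_graph V E \<longleftrightarrow> V \<noteq> {} \<and> (\<forall>u\<in>V. \<forall>v\<in>V. E\<^sup>*\<^sup>* u v)"

definition nbhd :: "'a set \<Rightarrow> ('a \<Rightarrow> 'a \<Rightarrow> bool) \<Rightarrow> 'a \<Rightarrow> 'a set" where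
  "nbhd V E v = {u\<in>V. E v u}"

definition deg :: "'a set \<Rightarrow> ('a \<Rightarrow> 'a \<Rightarrow> bool) \<Rightarrow> 'a \<Rightarrow> nat" where
  "deg V E v = card (nbhd V E v)"

definition in_Gab :: "int \<Rightarrow> int \<Rightarrow> 'a set \<Rightarrow> ('a \<Rightarrow> 'a \<Rightarrow> bool) \<Rightarrow> bool" where
  "in_Gab a b V E \<longleftrightarrow> simple_graph V E \<and> connected_graph V E \<and>
     (\<forall>v\<in>V. (\<Sum>u\<in>nbhd V E v. int (deg V E u)) = a * int (deg V E v) + b - int (deg V E v)^2)"

definition pendant_vertices :: "'a set \<Rightarrow> ('a \<Rightarrow> 'a \<Rightarrow> bool) \<Rightarrow> 'a set" where
  "pendant_vertices V E = {v\<in>V. deg V E v = 1}"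

definition is_path :: "'a set \<Rightarrow> ('a \<Rightarrow> 'a \<Rightarrow> bool) \<Rightarrow> 'a list \<Rightarrow> bool" where
  "is_path V E p \<longleftrightarrow> p \<noteq> [] \<and> distinct p \<and> set p \<subseteq> V \<and>
     (\<forall>i. Suc i < length p \<longrightarrow> E (p ! i) (p ! Suc i))"

definition has_cycle :: "'a set \<Rightarrow> ('a \<Rightarrow> 'a \<Rightarrow> bool) \<Rightarrow> bool" where
  "has_cycle V E \<longleftrightarrow> (\<exists>c. is_path V E c \<and> length c \<ge> 3 \<and> E (last c) (hd c))"

definition prune :: "('a \<Rightarrow> 'a \<Rightarrow> bool) \<Rightarrow> 'a set \<Rightarrow> 'a set" where
  "prune E S = {v\<in>S. deg S E v \<noteq> 1}"

text \<open>The base: iterate pruning until stable (|V| rounds suffice, as each non-stable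
  round removes at least one vertex).\<close>
definition base :: "'a set \<Rightarrow> ('a \<Rightarrow> 'a \<Rightarrow> bool) \<Rightarrow> 'a set" where
  "base V E = (prune E ^^ card V) V"

text \<open>Pendant path v_0 ... v_k (as the list [v_0,...,v_k]).\<close>
definition pendant_path :: "'a set \<Rightarrow> ('a \<Rightarrow> 'a \<Rightarrow> bool) \<Rightarrow> 'a list \<Rightarrow> bool" where
  "pendant_path V E p \<longleftrightarrow> is_path V E p \<and> hd p \<in> pendant_vertices V E \<and>
     last p \<in> base V E \<and> (\<forall>i. 1 \<le> i \<and> i < length p - 1 \<longrightarrow> p ! i \<notin> base V E)"

definition longest_pendant_path :: "'a set \<Rightarrow> ('a \<Rightarrow> 'a \<Rightarrow> bool) \<Rightarrow> 'a list \<Rightarrow> bool" where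
  "longest_pendant_path V E p \<longleftrightarrow> pendant_path V E p \<and>
     (\<forall>q. pendant_path V E q \<longrightarrow> length q \<le> length p)"

end

theory Submission
  imports Defs
begin

lemma fin_nbhd: "simple_graph V E \<Longrightarrow> finite (nbhd V E v)"
  unfolding simple_graph_def nbhd_def by auto

lemma deg_pos: assumes "simple_graph V E" "E v u" shows "deg V E u \<ge> 1"
proof -
  have "v \<in> nbhd V E u" using assms unfolding simple_graph_def nbhd_def by auto
  hence "nbhd V E u \<noteq> {}" by auto
  thus ?thesis using fin_nbhd[OF assms(1)] unfolding deg_def
    by (simp add: Suc_le_eq card_gt_0_iff)
qed

lemma pendant_nbhd:
  assumes "simple_graph V E" "deg V E w = 1" "E w x"
  shows "nbhd V E w = {x}"
proof -
  obtain z where z: "nbhd V E w = {z}" using assms(2) unfolding deg_def by (auto simp: card_1_singleton_iff)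
  have "x \<in> nbhd V E w" using assms(1,3) unfolding simple_graph_def nbhd_def by auto
  thus ?thesis using z by auto
qed

lemma S_sub: "(prune E ^^ j) V \<subseteq> V"
  by (induction j) (auto simp: prune_def)

lemma S_mono: "j \<le> m \<Longrightarrow> (prune E ^^ m) V \<subseteq> (prune E ^^ j) V"
proof (induction m)
  case 0 thus ?case by simp
next
  case (Suc m)
  show ?case
  proof (cases "j = Suc m")
    case False
    hence "j \<le> m" using Suc.prems by simp
    thus ?thesis using Suc.IH by (auto simp: prune_def)
  qed simp
qed

lemma no_cycle:
  assumes sg: "simple_graph V E" and pend: "\<forall>v\<in>V-{x,y}. deg V E v = 1"
  shows "\<not> has_cycle V E"
proof
  assume "has_cycle V E"
  then obtain c where c: "is_path V E c" "length c \<ge> 3" "E (last c) (hd c)" unfolding has_cycle_def by blast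
  define n where "n = length c"
  have cne: "c \<noteq> []" using c(2) by auto
  have dc: "distinct c" using c(1) unfolding is_path_def by auto
  have two: "\<forall>i<n. card (nbhd V E (c!i)) \<ge> 2"
  proof (intro allI impI)
    fix i assume i: "i < n"
    define j where "j = (if Suc i < n then Suc i else 0)"
    define k where "k = (if i = 0 then n - 1 else i - 1)"
    have jn: "j < n" and kn: "k < n" using i c(2) by (auto simp: j_def k_def n_def)
    have "j \<noteq> k" using i c(2) by (auto simp: j_def k_def n_def)
    hence cjk: "c!j \<noteq> c!k" using dc jn kn unfolding n_def by (simp add: nth_eq_iff_index_eq)
    have Ej: "E (c!i) (c!j)"
    proof (cases "Suc i < n")
      case True thus ?thesis using c(1) unfolding is_path_def j_def n_def by auto
    next
      case False
      hence "i = n - 1" using i by auto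
      hence "c!i = last c" using cne by (simp add: last_conv_nth n_def)
      moreover have "c!j = hd c" using False cne by (simp add: j_def hd_conv_nth n_def)
      ultimately show ?thesis using c(3) by simp
    qed
    have Ek: "E (c!i) (c!k)"
    proof (cases "i = 0")
      case True
      hence "c!k = last c" using cne by (simp add: k_def last_conv_nth n_def)
      moreover have "c!i = hd c" using True cne by (simp add: hd_conv_nth)
      ultimately show ?thesis using c(3) sg unfolding simple_graph_def by auto
    next
      case False
      hence "Suc k = i" by (simp add: k_def)
      hence "E (c!k) (c!i)" using c(1) i unfolding is_path_def n_def by auto
      thus ?thesis using sg unfolding simple_graph_def by auto
    qed
    have "c!i \<in> V" "c!j \<in> V" "c!k \<in> V" using Ej Ek sg unfolding simple_graph_def by auto
    hence "{c!j, c!k} \<subseteq> nbhd V E (c!i)" using Ej Ek unfolding nbhd_def by auto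
    hence "card {c!j, c!k} \<le> card (nbhd V E (c!i))" using fin_nbhd[OF sg] by (rule card_mono[rotated])
    thus "card (nbhd V E (c!i)) \<ge> 2" using cjk by simp
  qed
  have "set c \<subseteq> {x,y}"
  proof
    fix v assume vc: "v \<in> set c"
    then obtain i where i: "i < n" "v = c!i" by (auto simp: in_set_conv_nth n_def)
    have "v \<in> V" using c(1) vc unfolding is_path_def by auto
    show "v \<in> {x,y}"
    proof (rule ccontr)
      assume "v \<notin> {x,y}"
      hence "card (nbhd V E v) = 1" using pend \<open>v \<in> V\<close> unfolding deg_def by auto
      moreover have "2 \<le> card (nbhd V E v)" using two i by auto
      ultimately show False by simp
    qed
  qed
  hence "card (set c) \<le> card {x,y}" by (rule card_mono[rotated]) simp
  also have "\<dots> \<le> 2" by (cases "x = y") auto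
  finally show False using distinct_card[OF dc] c(2) by simp
qed

lemma alg:
  fixes a b D dy :: int
  assumes h1: "D = a + b - 1" and h2: "dy + D - 1 = a*D + b - D^2" and h3: "D \<ge> 2" and h4: "dy \<ge> 2"
  shows "a*dy + b - dy^2 \<le> D + dy - 1"
proof -
  define X where "X = D - 1"
  define Y where "Y = a - 1 - D"
  have bb: "b = D + 1 - a" using h1 by simp
  have dyXY: "dy - 1 = X * Y" using h2 unfolding X_def Y_def bb by (simp add: algebra_simps power2_eq_square)
  have X1: "X \<ge> 1" using h3 X_def by simp
  have Y1: "Y \<ge> 1"
  proof (rule ccontr)
    assume "\<not> Y \<ge> 1" hence "Y \<le> 0" by simp
    hence "X * Y \<le> 0" using X1 by (simp add: mult_nonneg_nonpos)
    thus False using dyXY h4 by simp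
  qed
  have q: "(X - 1) * (Y - 1) \<ge> 0" using X1 Y1 by simp
  have e1: "a*dy + b - dy^2 - (D + dy - 1) = (dy - 1) * (a - dy - 2)"
    unfolding bb by (simp add: algebra_simps power2_eq_square)
  have e2: "a - dy - 2 = - ((X - 1) * (Y - 1))"
    using dyXY unfolding X_def Y_def by (simp add: algebra_simps)
  have "(dy - 1) * (a - dy - 2) \<le> 0" unfolding e2 using h4 q by (simp add: mult_nonneg_nonpos)
  thus ?thesis using e1 by simp
qed

lemma star_contra:
  assumes G: "in_Gab a b V E" and xV: "x \<in> V" and Exy: "E x y"
    and P: "\<forall>w\<in>nbhd V E x - {y}. deg V E w = 1"
    and ne: "nbhd V E x - {y} \<noteq> {}"
  shows "\<forall>v\<in>V-{x,y}. deg V E v = 1"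
proof -
  have sg: "simple_graph V E" and conn: "connected_graph V E"
    and eq: "\<forall>v\<in>V. (\<Sum>u\<in>nbhd V E v. int (deg V E u)) = a * int (deg V E v) + b - int (deg V E v)^2"
    using G unfolding in_Gab_def by auto
  have sym: "\<And>u v. E u v \<Longrightarrow> E v u" and inV: "\<And>u v. E u v \<Longrightarrow> u \<in> V \<and> v \<in> V"
    using sg unfolding simple_graph_def by auto
  have fin: "\<And>v. finite (nbhd V E v)" using fin_nbhd[OF sg] .
  obtain w0 where w0: "w0 \<in> nbhd V E x - {y}" using ne by auto
  have Exw0: "E x w0" and w0V: "w0 \<in> V" using w0 unfolding nbhd_def by auto
  have Nw0: "nbhd V E w0 = {x}" using pendant_nbhd[OF sg] P w0 sym Exw0 by blast
  have "int (deg V E x) = a * 1 + b - 1"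
    using eq[rule_format, OF w0V] P w0 Nw0 by simp
  hence hD: "int (deg V E x) = a + b - 1" by simp
  have yN: "y \<in> nbhd V E x" using Exy inV unfolding nbhd_def by auto
  have Nx: "nbhd V E x = insert y (nbhd V E x - {y})" using yN by auto
  have cardx: "card (nbhd V E x - {y}) = deg V E x - 1" using yN fin unfolding deg_def by simp
  have degx2: "deg V E x \<ge> 2"
  proof -
    have "{y, w0} \<subseteq> nbhd V E x" using yN w0 by auto
    hence "card {y,w0} \<le> deg V E x" unfolding deg_def using fin by (rule card_mono[rotated])
    thus ?thesis using w0 by auto
  qed
  have "(\<Sum>u\<in>nbhd V E x. int (deg V E u)) = int (deg V E y) + (\<Sum>u\<in>nbhd V E x - {y}. int (deg V E u))"
    by (rule sum.remove[OF fin yN])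
  also have "(\<Sum>u\<in>nbhd V E x - {y}. int (deg V E u)) = (\<Sum>u\<in>nbhd V E x - {y}. 1)"
    using P by simp
  also have "\<dots> = int (deg V E x) - 1" using cardx degx2 by simp
  finally have hx: "int (deg V E y) + int (deg V E x) - 1 = a * int (deg V E x) + b - int (deg V E x)^2"
    using eq xV by simp
  have xNy: "x \<in> nbhd V E y" using Exy sym inV unfolding nbhd_def by auto
  have Ny: "nbhd V E y = insert x (nbhd V E y - {x})" using xNy by auto
  have cardy: "card (nbhd V E y - {x}) = deg V E y - 1" using xNy fin unfolding deg_def by simp
  have dy1: "deg V E y \<ge> 1" using deg_pos[OF sg Exy] .
  have yV: "y \<in> V" using inV Exy by auto
  have hy: "int (deg V E x) + (\<Sum>u\<in>nbhd V E y - {x}. int (deg V E u)) = a * int (deg V E y) + b - int (deg V E y)^2"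
  proof -
    have r: "(\<Sum>u\<in>nbhd V E y. int (deg V E u)) = int (deg V E x) + (\<Sum>u\<in>nbhd V E y - {x}. int (deg V E u))"
      by (rule sum.remove[OF fin xNy])
    show ?thesis using eq[rule_format, OF yV] unfolding r .
  qed
  have ineq: "a * int (deg V E y) + b - int (deg V E y)^2 \<le> int (deg V E x) + int (deg V E y) - 1"
  proof (cases "deg V E y = 1")
    case True thus ?thesis using hD by simp
  next
    case False
    hence dy2: "int (deg V E y) \<ge> 2" using dy1 by simp
    have dx2: "int (deg V E x) \<ge> 2" using degx2 by simp
    show ?thesis using alg[OF hD hx dx2 dy2] by assumption
  qed
  have "(\<Sum>u\<in>nbhd V E y - {x}. int (deg V E u)) = (\<Sum>u\<in>nbhd V E y - {x}. (int (deg V E u) - 1)) + int (deg V E y) - 1"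
    using cardy dy1 by (simp add: sum_subtractf)
  hence sle: "(\<Sum>u\<in>nbhd V E y - {x}. (int (deg V E u) - 1)) \<le> 0" using hy ineq by simp
  have nn: "\<forall>u\<in>nbhd V E y - {x}. int (deg V E u) - 1 \<ge> 0"
  proof
    fix u assume "u \<in> nbhd V E y - {x}"
    hence "E y u" unfolding nbhd_def by auto
    hence "deg V E u \<ge> 1" by (rule deg_pos[OF sg])
    thus "int (deg V E u) - 1 \<ge> 0" by simp
  qed
  hence "(\<Sum>u\<in>nbhd V E y - {x}. (int (deg V E u) - 1)) \<ge> 0" by (intro sum_nonneg) simp
  hence s0: "(\<Sum>u\<in>nbhd V E y - {x}. (int (deg V E u) - 1)) = 0" using sle by simp
  have Q: "\<forall>u\<in>nbhd V E y - {x}. deg V E u = 1"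
  proof
    fix u assume u: "u \<in> nbhd V E y - {x}"
    have fd: "finite (nbhd V E y - {x})" using fin by simp
    have "\<forall>u\<in>nbhd V E y - {x}. int (deg V E u) - 1 = 0"
      using iffD1[OF sum_nonneg_eq_0_iff[OF fd bspec[OF nn]] s0] .
    hence "int (deg V E u) - 1 = 0" using u by simp
    thus "deg V E u = 1" by simp
  qed
  define C where "C = {x,y} \<union> nbhd V E x \<union> nbhd V E y"
  have closed: "\<And>v u. v \<in> C \<Longrightarrow> E v u \<Longrightarrow> u \<in> C"
  proof -
    fix v u assume v: "v \<in> C" and vu: "E v u"
    show "u \<in> C"
    proof (cases "v = x \<or> v = y")
      case True thus ?thesis using vu inV unfolding C_def nbhd_def by auto
    next
      case False
      hence "(v \<in> nbhd V E x - {y} \<and> E v x) \<or> (v \<in> nbhd V E y - {x} \<and> E v y)"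
        using v sym unfolding C_def nbhd_def by auto
      hence "nbhd V E v = {x} \<or> nbhd V E v = {y}"
      proof
        assume h: "v \<in> nbhd V E x - {y} \<and> E v x"
        hence "deg V E v = 1" using P by blast
        thus ?thesis using pendant_nbhd[OF sg _ conjunct2[OF h]] by simp
      next
        assume h: "v \<in> nbhd V E y - {x} \<and> E v y"
        hence "deg V E v = 1" using Q by blast
        thus ?thesis using pendant_nbhd[OF sg _ conjunct2[OF h]] by simp
      qed
      moreover have "u \<in> nbhd V E v" using vu inV unfolding nbhd_def by auto
      ultimately show ?thesis unfolding C_def by auto
    qed
  qed
  have "\<And>v. E\<^sup>*\<^sup>* x v \<Longrightarrow> v \<in> C"
  proof -
    fix v assume "E\<^sup>*\<^sup>* x v"
    thus "v \<in> C"
    proof induction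
      case base thus ?case by (simp add: C_def)
    next
      case (step w z) thus ?case using closed by blast
    qed
  qed
  hence VC: "V \<subseteq> C" using conn xV unfolding connected_graph_def by auto
  show ?thesis
  proof
    fix v assume v: "v \<in> V - {x,y}"
    hence "v \<in> nbhd V E x - {y} \<or> v \<in> nbhd V E y - {x}" using VC unfolding C_def by auto
    thus "deg V E v = 1" using P Q by auto
  qed
qed

theorem lemma1p7:
  fixes a b :: int and V :: "'a set" and E :: "'a \<Rightarrow> 'a \<Rightarrow> bool" and p :: "'a list"
  assumes "in_Gab a b V E"
    and "has_cycle V E"
    and "pendant_vertices V E \<noteq> {}"
    and "longest_pendant_path V E p"
  shows "length p - 1 = 1"
proof -
  note G = assms(1)
  have sg: "simple_graph V E" using G unfolding in_Gab_def by auto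
  have sym: "\<And>u v. E u v \<Longrightarrow> E v u" and inV: "\<And>u v. E u v \<Longrightarrow> u \<in> V \<and> v \<in> V"
    and finV: "finite V"
    using sg unfolding simple_graph_def by auto
  have fin: "\<And>v. finite (nbhd V E v)" using fin_nbhd[OF sg] .
  define S where "S = (\<lambda>j. (prune E ^^ j) V)"
  have Ssuc: "\<And>j. S (Suc j) = prune E (S j)" by (simp add: S_def)
  have S0: "S 0 = V" by (simp add: S_def)
  have Smono: "\<And>j m. j \<le> m \<Longrightarrow> S m \<subseteq> S j" unfolding S_def by (rule S_mono)
  have SV: "\<And>j. S j \<subseteq> V" unfolding S_def by (rule S_sub)
  have base: "base V E = S (card V)" by (simp add: base_def S_def)
  from assms(4) have pp: "pendant_path V E p" unfolding longest_pendant_path_def by auto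
  hence path: "is_path V E p" and hdp: "hd p \<in> pendant_vertices V E" and lastp: "last p \<in> base V E"
    and mid: "\<forall>i. 1 \<le> i \<and> i < length p - 1 \<longrightarrow> p ! i \<notin> base V E"
    unfolding pendant_path_def by auto
  have pne: "p \<noteq> []" and dp: "distinct p" and pV: "set p \<subseteq> V"
    and pE: "\<forall>i. Suc i < length p \<longrightarrow> E (p ! i) (p ! Suc i)" using path unfolding is_path_def by auto
  have "V \<noteq> {}" using pne pV hd_in_set by blast
  hence Vne: "card V \<ge> 1" using finV by (simp add: Suc_le_eq card_gt_0_iff)
  have pend_notbase: "\<And>v. v \<in> pendant_vertices V E \<Longrightarrow> v \<notin> base V E"
  proof
    fix v assume v: "v \<in> pendant_vertices V E" "v \<in> base V E"
    have "base V E \<subseteq> S (Suc 0)" using Smono[of "Suc 0" "card V"] Vne base by auto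
    hence "v \<in> S (Suc 0)" using v by auto
    thus False using v(1) by (simp add: Ssuc S0 prune_def pendant_vertices_def)
  qed
  show ?thesis
  proof (rule ccontr)
    assume ne2: "length p - 1 \<noteq> 1"
    have "length p \<noteq> 1"
    proof
      assume "length p = 1"
      hence "hd p = last p" by (cases p) auto
      thus False using hdp lastp pend_notbase by auto
    qed
    moreover have "length p > 0" using pne by simp
    ultimately have L3: "length p \<ge> 3" using ne2 by linarith
    define v1 where "v1 = p ! 1"
    have v1nb: "v1 \<notin> base V E" using mid L3 unfolding v1_def by auto
    have E10: "E v1 (p!0)" using pE L3 sym unfolding v1_def by fastforce
    have E12: "E v1 (p!2)" using pE[rule_format, of 1] L3 unfolding v1_def by (simp add: numeral_2_eq_2)
    have d02: "p!0 \<noteq> p!2" proof -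
      have "0 < length p" "2 < length p" using L3 by auto
      hence "(p!0 = p!2) = ((0::nat) = 2)" using dp by (simp only: nth_eq_iff_index_eq)
      thus ?thesis by simp
    qed
    have v1V: "v1 \<in> V" using inV E10 by auto
    have degv1: "deg V E v1 \<ge> 2"
    proof -
      have "{p!0, p!2} \<subseteq> nbhd V E v1" using E10 E12 inV unfolding nbhd_def by auto
      hence "card {p!0, p!2} \<le> deg V E v1" unfolding deg_def using fin by (rule card_mono[rotated])
      thus ?thesis using d02 by auto
    qed
    define T where "T = {v\<in>V. v \<notin> base V E \<and> deg V E v \<ge> 2}"
    define rd where "rd = (\<lambda>v. LEAST r. v \<notin> S r)"
    have v1T: "v1 \<in> T" using v1V v1nb degv1 unfolding T_def by auto
    obtain x where xT: "x \<in> T" and xmin: "\<forall>z. z \<in> T \<longrightarrow> rd x \<le> rd z"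
      using ex_has_least_nat[of "\<lambda>v. v \<in> T" v1 rd] v1T by blast
    have rdle: "\<And>v. v \<in> V - base V E \<Longrightarrow> rd v \<le> card V \<and> v \<notin> S (rd v)"
    proof -
      fix v assume "v \<in> V - base V E"
      hence "v \<notin> S (card V)" using base by auto
      have a1: "rd v \<le> card V" unfolding rd_def using \<open>v \<notin> S (card V)\<close> by (rule Least_le)
      have a2: "v \<notin> S (rd v)" unfolding rd_def using \<open>v \<notin> S (card V)\<close> by (rule LeastI)
      show "rd v \<le> card V \<and> v \<notin> S (rd v)" using a1 a2 by simp
    qed
    have xV: "x \<in> V" and xnb: "x \<notin> base V E" and degx: "deg V E x \<ge> 2" using xT unfolding T_def by auto
    have rx: "rd x \<le> card V" "x \<notin> S (rd x)" using rdle xV xnb by auto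
    have "rd x \<noteq> 0"
    proof
      assume "rd x = 0"
      hence "x \<notin> S 0" using rx(2) by simp
      thus False using S0 xV by simp
    qed
    then obtain j where j: "rd x = Suc j" by (cases "rd x") auto
    have xSj: "x \<in> S j"
    proof (rule ccontr)
      assume "x \<notin> S j"
      hence "rd x \<le> j" unfolding rd_def by (rule Least_le)
      thus False using j by simp
    qed
    have "deg (S j) E x = 1" using xSj rx(2) j Ssuc unfolding prune_def by auto
    then obtain y where Ny: "nbhd (S j) E x = {y}" unfolding deg_def by (auto simp: card_1_singleton_iff)
    have Exy: "E x y" using Ny unfolding nbhd_def by auto
    have Pw: "\<forall>w\<in>nbhd V E x - {y}. deg V E w = 1"
    proof
      fix w assume w: "w \<in> nbhd V E x - {y}"
      have Exw: "E x w" and wV: "w \<in> V" using w unfolding nbhd_def by auto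
      have "w \<notin> S j" using w Ny Exw unfolding nbhd_def by auto
      hence rdw: "rd w \<le> j" unfolding rd_def by (rule Least_le)
      have "base V E \<subseteq> S j" using base Smono[of j "card V"] rx(1) j by auto
      hence wnb: "w \<notin> base V E" using \<open>w \<notin> S j\<close> by auto
      have "deg V E w \<ge> 1" using deg_pos[OF sg Exw] .
      moreover have "\<not> deg V E w \<ge> 2"
      proof
        assume "deg V E w \<ge> 2"
        hence "w \<in> T" using wV wnb unfolding T_def by auto
        hence "rd x \<le> rd w" using xmin by auto
        thus False using rdw j by simp
      qed
      ultimately show "deg V E w = 1" by simp
    qed
    have nePw: "nbhd V E x - {y} \<noteq> {}"
    proof
      assume "nbhd V E x - {y} = {}"
      hence "nbhd V E x \<subseteq> {y}" by auto
      hence "deg V E x \<le> card {y}" unfolding deg_def by (rule card_mono[rotated]) simp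
      thus False using degx by simp
    qed
    have "\<forall>v\<in>V-{x,y}. deg V E v = 1" using star_contra[OF G xV Exy Pw nePw] .
    hence "\<not> has_cycle V E" by (rule no_cycle[OF sg])
    thus False using assms(2) by simp
  qed
qed

end
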